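(* Let $n\ge 2$. The number of MAU pairs $(u,v)$ of binary words with $|u|=|v|=n$ and $\big||u|_c-|v|_c\big|\ge 2$ for all $c\in\{a,b\}$ equals $$2\sum_{r_2=0}^{n-2}\ \sum_{r_1=r_2+2}^{n}{}_{A}N_{O}^{B_{r_2}},$$ where, for each $(r_1,r_2)$, $A=(r_2-r_1,\,r_1-r_2)$, $O=(0,0)$ and $B_{r_2}=(r_2,\,n-r_2)$.
   Context: Let $\Sigma=\{a,b\}$. For a word $w$ and a letter $c$, $|w|_c$ denotes the number of occurrences of $c$ in $w$. Two words $x,y$ are abelian equivalent, written $x\sim_{\mathrm{abl}}y$, if $|x|_c=|y|_c$ for all $c\in\Sigma$. For words $u,v$: a pair $(x,y)$ is an internal abelian-border of $(u,v)$ if $x$ is a nonempty proper suffix of $u$, $y$ is a proper prefix of $v$, and $x\sim_{\mathrm{abl}}y$; it is an external abelian-border of $(u,v)$ if $x$ is a nonempty proper prefix of $u$, $y$ is a proper suffix of $v$, and $x\sim_{\mathrm{abl}}y$. The pair $(u,v)$ is mutually abelian-bordered (MAB) if it has both an internal and an external abelian-border, and mutually abelian-unbordered (MAU) if it has neither. A lattice path is a finite sequence of points of $\mathbb Z^2$ in which each consecutive difference is $(1,0)$ (an east step) or $(0,1)$ (a north step). The word $w(p)\in\Sigma^*$ of a lattice path $p$ records its steps in order, writing $a$ for an east step and $b$ for a north step; conversely, for a point $A\in\mathbb Z^2$ and a word $w$, $p_A(w)$ is the lattice path starting at $A$ whose word is $w$. For lattice paths $p,q$, $p\cap q$ denotes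 the set of lattice points lying on both. For distinct lattice points $A,B,C$, ${}_{A}\mathcal N_{B}^{C}$ is the set of triples $(p,q,p')$ where $p$ is a lattice path from $A$ to $C$, $q$ is a lattice path from $B$ to $C$, $p'=p_B(w(p))$, $p\cap q=\{C\}$ and $q\cap p'=\{B\}$; and ${}_{A}N_{B}^{C}=|{}_{A}\mathcal N_{B}^{C}|$. *)

theory Defs
  imports Main "HOL-Library.Sublist"
begin

datatype letter = La | Lb

definition abel_eq :: "letter list \<Rightarrow> letter list \<Rightarrow> bool" where
  "abel_eq x y \<longleftrightarrow> (\<forall>c. count_list x c = count_list y c)"

definition int_abel_border :: "letter list \<Rightarrow> letter list \<Rightarrow> letter list \<Rightarrow> letter list \<Rightarrow> bool" where
  "int_abel_border u v x y \<longleftrightarrow> x \<noteq> [] \<and> strict_suffix x u \<and> strict_prefix y v \<and> abel_eq x y"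

definition ext_abel_border :: "letter list \<Rightarrow> letter list \<Rightarrow> letter list \<Rightarrow> letter list \<Rightarrow> bool" where
  "ext_abel_border u v x y \<longleftrightarrow> x \<noteq> [] \<and> strict_prefix x u \<and> strict_suffix y v \<and> abel_eq x y"

definition MAU :: "letter list \<Rightarrow> letter list \<Rightarrow> bool" where
  "MAU u v \<longleftrightarrow> \<not> (\<exists>x y. int_abel_border u v x y) \<and> \<not> (\<exists>x y. ext_abel_border u v x y)"

type_synonym point = "int \<times> int"

definition lattice_path :: "point list \<Rightarrow> bool" where
  "lattice_path p \<longleftrightarrow> p \<noteq> [] \<and>
     (\<forall>i. Suc i < length p \<longrightarrow>
        p ! Suc i = (fst (p ! i) + 1, snd (p ! i)) \<or> p ! Suc i = (fst (p ! i), snd (p ! i) + 1))"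

definition word_of :: "point list \<Rightarrow> letter list" where
  "word_of p = map (\<lambda>(P, Q). if Q = (fst P + 1, snd P) then La else Lb) (zip p (tl p))"

fun step :: "point \<Rightarrow> letter \<Rightarrow> point" where
  "step (x, y) La = (x + 1, y)"
| "step (x, y) Lb = (x, y + 1)"

fun path_from :: "point \<Rightarrow> letter list \<Rightarrow> point list" where
  "path_from P [] = [P]"
| "path_from P (c # w) = P # path_from (step P c) w"

definition Ntriples :: "point \<Rightarrow> point \<Rightarrow> point \<Rightarrow> (point list \<times> point list \<times> point list) set" where
  "Ntriples A B C = {(p, q, p').
      lattice_path p \<and> hd p = A \<and> last p = C \<and>
      lattice_path q \<and> hd q = B \<and> last q = C \<and>
      p' = path_from B (word_of p) \<and>
      set p \<inter> set q = {C} \<and> set q \<inter> set p' = {B}}"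

definition Ncount :: "point \<Rightarrow> point \<Rightarrow> point \<Rightarrow> nat" where
  "Ncount A B C = card (Ntriples A B C)"

end

theory Submission imports Defs begin

definition par :: "letter list \<Rightarrow> point" where
  "par w = (int (count_list w La), int (count_list w Lb))"

definition padd :: "point \<Rightarrow> point \<Rightarrow> point" where
  "padd P Q = (fst P + fst Q, snd P + snd Q)"

lemma length_count: "length x = count_list x La + count_list x Lb"
proof (induction x)
  case (Cons a x) then show ?case by (cases a) auto
qed simp

lemma par_Cons: "par (c # x) = padd (par [c]) (par x)"
  by (cases c) (auto simp: par_def padd_def)

lemma par_append: "par (x @ y) = padd (par x) (par y)"
  by (simp add: par_def padd_def)

lemma par_sum: "fst (par x) + snd (par x) = int (length x)"
  by (simp add: par_def length_count)

lemma par_rev[simp]: "par (rev x) = par x"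
  by (simp add: par_def)

lemma abel_eq_par: "abel_eq x y \<longleftrightarrow> par x = par y"
proof
  assume "abel_eq x y" then show "par x = par y" by (simp add: abel_eq_def par_def)
next
  assume h: "par x = par y"
  show "abel_eq x y" unfolding abel_eq_def
  proof
    fix c show "count_list x c = count_list y c" using h by (cases c) (auto simp: par_def)
  qed
qed

lemma abel_eq_len: "abel_eq x y \<Longrightarrow> length x = length y"
  by (simp add: abel_eq_def length_count)

lemma step_padd: "step P c = padd P (par [c])"
  by (cases P; cases c) (auto simp: padd_def par_def)

lemma length_path[simp]: "length (path_from P w) = Suc (length w)"
  by (induction w arbitrary: P) auto

lemma hd_path[simp]: "hd (path_from P w) = P"
  by (cases w) auto

lemma path_nth: "i \<le> length w \<Longrightarrow> path_from P w ! i = padd P (par (take i w))"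
proof (induction w arbitrary: P i)
  case Nil then show ?case by (simp add: padd_def par_def)
next
  case (Cons c w)
  show ?case
  proof (cases i)
    case 0 then show ?thesis by (simp add: padd_def par_def)
  next
    case (Suc j)
    with Cons show ?thesis
      by (simp add: step_padd par_Cons[of c "take j w"] padd_def)
  qed
qed

lemma last_path: "last (path_from P w) = padd P (par w)"
proof -
  have "last (path_from P w) = path_from P w ! length w"
    by (metis diff_Suc_1 last_conv_nth length_path list.size(3) nat.distinct(1))
  then show ?thesis by (simp add: path_nth)
qed

lemma set_path: "set (path_from P w) = {padd P (par (take i w)) | i. i \<le> length w}"
proof -
  have "set (path_from P w) = {path_from P w ! i | i. i < Suc (length w)}"
    by (simp add: set_conv_nth)
  also have "\<dots> = {padd P (par (take i w)) | i. i \<le> length w}"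
    by (metis (no_types, lifting) less_Suc_eq_le path_nth)
  finally show ?thesis .
qed

lemma lattice_path_Cons2:
  "lattice_path (P # Q # r) \<longleftrightarrow>
     (Q = (fst P + 1, snd P) \<or> Q = (fst P, snd P + 1)) \<and> lattice_path (Q # r)"
  unfolding lattice_path_def
  apply (auto simp: nth_Cons split: nat.splits)
  done

lemma lattice_path_path: "lattice_path (path_from P w)"
  unfolding lattice_path_def
proof (intro conjI allI impI)
  fix i assume "Suc i < length (path_from P w)"
  then have i: "i < length w" by simp
  have "path_from P w ! Suc i = padd P (par (take i w @ [w ! i]))"
    using i by (simp add: path_nth take_Suc_conv_app_nth)
  moreover have "path_from P w ! i = padd P (par (take i w))" using i by (simp add: path_nth)
  ultimately show "path_from P w ! Suc i = (fst (path_from P w ! i) + 1, snd (path_from P w ! i)) \<or>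
        path_from P w ! Suc i = (fst (path_from P w ! i), snd (path_from P w ! i) + 1)"
    by (cases "w ! i") (auto simp: par_append padd_def par_def)
next
  show "path_from P w \<noteq> []" by (cases w) auto
qed

lemma word_of_Cons2: "word_of (P # Q # r) = (if Q = (fst P + 1, snd P) then La else Lb) # word_of (Q # r)"
  by (simp add: word_of_def)

lemma word_of_path[simp]: "word_of (path_from P w) = w"
proof (induction w arbitrary: P)
  case Nil then show ?case by (simp add: word_of_def)
next
  case (Cons c w)
  then show ?case
    by (cases w; cases P; cases c) (auto simp: word_of_Cons2 word_of_def)
qed

lemma path_word: "lattice_path p \<Longrightarrow> path_from (hd p) (word_of p) = p"
proof (induction p rule: induct_list012)
  case 1 then show ?case by (simp add: lattice_path_def)
next
  case (2 x) then show ?case by (simp add: word_of_def)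
next
  case (3 P Q r)
  then have l: "lattice_path (Q # r)" and st: "Q = (fst P + 1, snd P) \<or> Q = (fst P, snd P + 1)"
    by (auto simp: lattice_path_Cons2)
  have IH: "path_from Q (word_of (Q # r)) = Q # r" using 3(2) l by simp
  show ?case using st IH
    by (cases P) (auto simp: word_of_Cons2)
qed

lemma MAU_iff:
  assumes lu: "length u = n" and lv: "length v = n"
  shows "MAU u v \<longleftrightarrow> (\<forall>i. 0 < i \<and> i < n \<longrightarrow>
           par (drop i u) \<noteq> par (take (n - i) v) \<and> par (take i u) \<noteq> par (drop (n - i) v))"
proof
  assume M: "MAU u v"
  show "\<forall>i. 0 < i \<and> i < n \<longrightarrow>
           par (drop i u) \<noteq> par (take (n - i) v) \<and> par (take i u) \<noteq> par (drop (n - i) v)"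
  proof (intro allI impI conjI notI)
    fix i assume i: "0 < i \<and> i < n" and e: "par (drop i u) = par (take (n - i) v)"
    have "suffix (drop i u) u" unfolding suffix_def by (metis append_take_drop_id)
    moreover have "prefix (take (n - i) v) v" unfolding prefix_def by (metis append_take_drop_id)
    ultimately have "int_abel_border u v (drop i u) (take (n - i) v)"
      unfolding int_abel_border_def strict_suffix_def strict_prefix_def abel_eq_par
      using i e lu lv by (auto dest: arg_cong[of _ _ length])
    then show False using M unfolding MAU_def by blast
  next
    fix i assume i: "0 < i \<and> i < n" and e: "par (take i u) = par (drop (n - i) v)"
    have "prefix (take i u) u" unfolding prefix_def by (metis append_take_drop_id)
    moreover have "suffix (drop (n - i) v) v" unfolding suffix_def by (metis append_take_drop_id)
    ultimately have "ext_abel_border u v (take i u) (drop (n - i) v)"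
      unfolding ext_abel_border_def strict_suffix_def strict_prefix_def abel_eq_par
      using i e lu lv by (auto dest: arg_cong[of _ _ length])
    then show False using M unfolding MAU_def by blast
  qed
next
  assume R: "\<forall>i. 0 < i \<and> i < n \<longrightarrow>
           par (drop i u) \<noteq> par (take (n - i) v) \<and> par (take i u) \<noteq> par (drop (n - i) v)"
  have "\<not> int_abel_border u v x y" for x y
  proof
    assume "int_abel_border u v x y"
    then obtain zs ws where x: "x \<noteq> []" "u = zs @ x" "x \<noteq> u" and y: "v = y @ ws" "y \<noteq> v"
      and ab: "abel_eq x y"
      unfolding int_abel_border_def strict_suffix_def suffix_def strict_prefix_def prefix_def by blast
    have ly: "length y = length x" using abel_eq_len[OF ab] by simp
    define i where "i = length zs"
    have i: "0 < i" "i < n" using x lu by (auto simp: i_def)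
    have "x = drop i u" using x by (simp add: i_def)
    moreover have "y = take (n - i) v" using y ly x lu i_def by simp
    ultimately show False using R i ab by (auto simp: abel_eq_par)
  qed
  moreover have "\<not> ext_abel_border u v x y" for x y
  proof
    assume "ext_abel_border u v x y"
    then obtain zs ws where x: "x \<noteq> []" "u = x @ zs" "x \<noteq> u" and y: "v = ws @ y" "y \<noteq> v"
      and ab: "abel_eq x y"
      unfolding ext_abel_border_def strict_suffix_def suffix_def strict_prefix_def prefix_def by blast
    have ly: "length y = length x" using abel_eq_len[OF ab] by simp
    define i where "i = length x"
    have i: "0 < i" "i < n" using x lu by (auto simp: i_def)
    have "x = take i u" using x by (simp add: i_def)
    moreover have "y = drop (n - i) v" using y ly x lu lv i_def by simp
    ultimately show False using R i ab by (auto simp: abel_eq_par)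
  qed
  ultimately show "MAU u v" unfolding MAU_def by blast
qed

lemma int_ext_swap: "int_abel_border u v x y \<longleftrightarrow> ext_abel_border v u y x"
proof -
  have "abel_eq x y \<Longrightarrow> (x = []) = (y = [])" using abel_eq_len by fastforce
  moreover have "abel_eq x y = abel_eq y x" by (auto simp: abel_eq_def)
  ultimately show ?thesis unfolding int_abel_border_def ext_abel_border_def by blast
qed

lemma MAU_sym: "MAU u v \<longleftrightarrow> MAU v u"
  unfolding MAU_def by (metis int_ext_swap)

lemma par_td: "par x = padd (par (take i x)) (par (drop i x))"
  by (metis append_take_drop_id par_append)

lemma padd0[simp]: "padd (0,0) X = X"
  by (simp add: padd_def)

lemma par_sum_take: "i \<le> length x \<Longrightarrow> fst (par (take i x)) + snd (par (take i x)) = int i"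
  by (simp add: par_sum)

lemma inter1:
  assumes lu: "length u = n" and lw: "length w = n" and e: "padd A (par u) = par w"
    and A0: "fst A + snd A = 0"
  shows "set (path_from A u) \<inter> set (path_from (0,0) w) = {par w} \<longleftrightarrow>
         (\<forall>i<n. par (drop i u) \<noteq> par (drop i w))"
proof -
  have K: "padd A (par (take i u)) = par (take j w) \<longleftrightarrow> i = j \<and> par (drop i u) = par (drop i w)"
    if "i \<le> n" "j \<le> n" for i j
  proof -
    have s1: "fst (par (take i u)) + snd (par (take i u)) = int i" using that lu par_sum_take by auto
    have s2: "fst (par (take j w)) + snd (par (take j w)) = int j" using that lw par_sum_take by auto
    have t1: "par u = padd (par (take i u)) (par (drop i u))" by (rule par_td)
    have t2: "par w = padd (par (take i w)) (par (drop i w))" by (rule par_td)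
    show ?thesis
    proof
      assume h: "padd A (par (take i u)) = par (take j w)"
      then have "int i = int j" using s1 s2 A0 unfolding padd_def prod_eq_iff by auto
      then have ij: "i = j" by simp
      show "i = j \<and> par (drop i u) = par (drop i w)"
        using ij h t1 t2 e unfolding padd_def prod_eq_iff by auto
    next
      assume "i = j \<and> par (drop i u) = par (drop i w)"
      then show "padd A (par (take i u)) = par (take j w)"
        using t1 t2 e unfolding padd_def prod_eq_iff by auto
    qed
  qed
  have W: "par (take j w) = par w \<longleftrightarrow> j = n" if "j \<le> n" for j
    using par_sum_take[of j w] par_sum[of w] that lw by (auto simp: prod_eq_iff)
  have sp: "set (path_from A u) = {padd A (par (take i u)) | i. i \<le> n}" using lu by (simp add: set_path)
  have sq: "set (path_from (0,0) w) = {par (take j w) | j. j \<le> n}" using lw by (simp add: set_path)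
  show ?thesis
  proof
    assume S: "set (path_from A u) \<inter> set (path_from (0,0) w) = {par w}"
    show "\<forall>i<n. par (drop i u) \<noteq> par (drop i w)"
    proof (intro allI impI notI)
      fix i assume i: "i < n" and d: "par (drop i u) = par (drop i w)"
      have "padd A (par (take i u)) = par (take i w)" using K[of i i] i d by simp
      then have "par (take i w) = padd A (par (take i u)) \<and> i \<le> n" using i by simp
      then have "par (take i w) \<in> set (path_from A u)" unfolding sp by blast
      moreover have "par (take i w) \<in> set (path_from (0,0) w)" unfolding sq using i by auto
      ultimately have "par (take i w) = par w" using S by blast
      then show False using W[of i] i by simp
    qed
  next
    assume R: "\<forall>i<n. par (drop i u) \<noteq> par (drop i w)"
    show "set (path_from A u) \<inter> set (path_from (0,0) w) = {par w}"
    proof (intro equalityI subsetI)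
      fix X :: point assume "X \<in> set (path_from A u) \<inter> set (path_from (0,0) w)"
      then obtain i j where ij: "i \<le> n" "j \<le> n" "X = padd A (par (take i u))" "X = par (take j w)"
        unfolding sp sq by blast
      then have "padd A (par (take i u)) = par (take j w)" by simp
      then have "i = j" "par (drop i u) = par (drop i w)" using K[OF ij(1,2)] by auto
      then have "j = n" using R ij by (metis le_neq_implies_less)
      then show "X \<in> {par w}" using ij lw by simp
    next
      fix X :: point assume "X \<in> {par w}"
      then show "X \<in> set (path_from A u) \<inter> set (path_from (0,0) w)"
        unfolding sp sq using lu lw e by (auto intro!: exI[of _ n])
    qed
  qed
qed

lemma inter2:
  assumes lu: "length u = n" and lw: "length w = n" and ne: "par u \<noteq> par w"
  shows "set (path_from (0,0) w) \<inter> set (path_from (0,0) u) = {(0,0)} \<longleftrightarrow>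
         (\<forall>i. 0 < i \<and> i \<le> n \<longrightarrow> par (take i u) \<noteq> par (take i w))"
proof -
  have K: "par (take j w) = par (take i u) \<Longrightarrow> i = j" if "i \<le> n" "j \<le> n" for i j
    using par_sum_take[of i u] par_sum_take[of j w] that lu lw by (metis of_nat_eq_iff)
  have Z: "par (take i u) = (0,0) \<longleftrightarrow> i = 0" if "i \<le> n" for i
    using par_sum_take[of i u] that lu by (auto simp: prod_eq_iff par_def)
  have sp: "set (path_from (0,0) u) = {par (take i u) | i. i \<le> n}" using lu by (simp add: set_path)
  have sq: "set (path_from (0,0) w) = {par (take j w) | j. j \<le> n}" using lw by (simp add: set_path)
  show ?thesis
  proof
    assume S: "set (path_from (0,0) w) \<inter> set (path_from (0,0) u) = {(0,0)}"
    show "\<forall>i. 0 < i \<and> i \<le> n \<longrightarrow> par (take i u) \<noteq> par (take i w)"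
    proof (intro allI impI notI)
      fix i assume i: "0 < i \<and> i \<le> n" and d: "par (take i u) = par (take i w)"
      have "par (take i u) \<in> set (path_from (0,0) w) \<inter> set (path_from (0,0) u)"
        unfolding sp sq using i d by fastforce
      then show False using S Z[of i] i by auto
    qed
  next
    assume R: "\<forall>i. 0 < i \<and> i \<le> n \<longrightarrow> par (take i u) \<noteq> par (take i w)"
    show "set (path_from (0,0) w) \<inter> set (path_from (0,0) u) = {(0,0)}"
    proof (intro equalityI subsetI)
      fix X :: point assume "X \<in> set (path_from (0,0) w) \<inter> set (path_from (0,0) u)"
      then obtain i j where ij: "i \<le> n" "j \<le> n" "X = par (take i u)" "X = par (take j w)"
        unfolding sp sq by blast
      then have "i = j" using K by auto
      then have "i = 0" using R ij by auto
      then show "X \<in> {(0,0)}" using ij by (simp add: par_def)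
    next
      fix X :: point assume "X \<in> {(0,0)}"
      then show "X \<in> set (path_from (0,0) w) \<inter> set (path_from (0,0) u)"
        unfolding sp sq by (auto intro!: exI[of _ 0] simp: par_def)
    qed
  qed
qed


lemma par_len: "par u = (int (count_list u La), int (length u) - int (count_list u La))"
  by (simp add: par_def length_count)

lemma mau_N:
  assumes lu: "length u = n" and lv: "length v = n" and cu: "count_list u La = r1"
    and cv: "count_list v La = r2" and r: "r1 \<noteq> r2"
  shows "MAU u v \<longleftrightarrow>
     set (path_from (int r2 - int r1, int r1 - int r2) u) \<inter> set (path_from (0,0) (rev v)) = {(int r2, int n - int r2)} \<and>
     set (path_from (0,0) (rev v)) \<inter> set (path_from (0,0) u) = {(0,0)}"
proof -
  let ?A = "(int r2 - int r1, int r1 - int r2)"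
  have pu: "par u = (int r1, int n - int r1)" using lu cu by (simp add: par_len)
  have pv: "par v = (int r2, int n - int r2)" using lv cv by (simp add: par_len)
  have ne: "par u \<noteq> par (rev v)" using pu pv r by simp
  have e: "padd ?A (par u) = par (rev v)" using pu pv by (simp add: padd_def)
  have I1: "set (path_from ?A u) \<inter> set (path_from (0,0) (rev v)) = {(int r2, int n - int r2)} \<longleftrightarrow>
         (\<forall>i<n. par (drop i u) \<noteq> par (take (n - i) v))"
    using inter1[of u n "rev v" ?A] lu lv e pv by (simp add: drop_rev)
  have I2: "set (path_from (0,0) (rev v)) \<inter> set (path_from (0,0) u) = {(0,0)} \<longleftrightarrow>
         (\<forall>i. 0 < i \<and> i \<le> n \<longrightarrow> par (take i u) \<noteq> par (drop (n - i) v))"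
    using inter2[of u n "rev v"] lu lv ne by (simp add: take_rev)
  have M: "MAU u v \<longleftrightarrow> (\<forall>i. 0 < i \<and> i < n \<longrightarrow>
           par (drop i u) \<noteq> par (take (n - i) v) \<and> par (take i u) \<noteq> par (drop (n - i) v))"
    by (rule MAU_iff[OF lu lv])
  have R1: "(\<forall>i<n. par (drop i u) \<noteq> par (take (n - i) v)) \<longleftrightarrow>
            (\<forall>i. 0 < i \<and> i < n \<longrightarrow> par (drop i u) \<noteq> par (take (n - i) v))"
  proof
    assume h: "\<forall>i. 0 < i \<and> i < n \<longrightarrow> par (drop i u) \<noteq> par (take (n - i) v)"
    show "\<forall>i<n. par (drop i u) \<noteq> par (take (n - i) v)"
    proof (intro allI impI)
      fix i assume i: "i < n"
      show "par (drop i u) \<noteq> par (take (n - i) v)"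
      proof (cases "i = 0")
        case True then show ?thesis using ne lv by simp
      next
        case False then show ?thesis using h i by simp
      qed
    qed
  qed simp
  have R2: "(\<forall>i. 0 < i \<and> i \<le> n \<longrightarrow> par (take i u) \<noteq> par (drop (n - i) v)) \<longleftrightarrow>
            (\<forall>i. 0 < i \<and> i < n \<longrightarrow> par (take i u) \<noteq> par (drop (n - i) v))"
  proof
    assume h: "\<forall>i. 0 < i \<and> i < n \<longrightarrow> par (take i u) \<noteq> par (drop (n - i) v)"
    show "\<forall>i. 0 < i \<and> i \<le> n \<longrightarrow> par (take i u) \<noteq> par (drop (n - i) v)"
    proof (intro allI impI)
      fix i assume i: "0 < i \<and> i \<le> n"
      show "par (take i u) \<noteq> par (drop (n - i) v)"
      proof (cases "i = n")
        case True then show ?thesis using ne lu by simp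
      next
        case False then show ?thesis using h i by simp
      qed
    qed
  qed simp
  show ?thesis unfolding M I1 I2 R1 R2 by blast
qed

definition Wset :: "nat \<Rightarrow> nat \<Rightarrow> nat \<Rightarrow> (letter list \<times> letter list) set" where
  "Wset n r1 r2 = {(u,v). length u = n \<and> length v = n \<and> count_list u La = r1 \<and>
      count_list v La = r2 \<and> MAU u v}"

lemma core:
  assumes r: "r2 + 2 \<le> r1" "r1 \<le> n"
  shows "Ntriples (int r2 - int r1, int r1 - int r2) (0,0) (int r2, int n - int r2) =
     (\<lambda>(u,v). (path_from (int r2 - int r1, int r1 - int r2) u, path_from (0,0) (rev v), path_from (0,0) u))
       ` Wset n r1 r2" (is "?N = ?F ` ?W")
proof (intro equalityI subsetI)
  let ?A = "(int r2 - int r1, int r1 - int r2)"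
  let ?C = "(int r2, int n - int r2)"
  fix t assume t: "t \<in> ?N"
  then obtain p q p' where tp: "t = (p, q, p')" by (cases t) auto
  define u where "u = word_of p"
  define w where "w = word_of q"
  have P: "lattice_path p" "hd p = ?A" "last p = ?C" "lattice_path q" "hd q = (0,0)" "last q = ?C"
      "p' = path_from (0,0) u" "set p \<inter> set q = {?C}" "set q \<inter> set p' = {(0,0)}"
    using t tp by (auto simp: Ntriples_def u_def)
  have pe: "p = path_from ?A u" using path_word[OF P(1)] P(2) by (simp add: u_def)
  have qe: "q = path_from (0,0) w" using path_word[OF P(4)] P(5) by (simp add: w_def)
  have "padd ?A (par u) = ?C" using P(3) pe last_path by metis
  then have cu: "count_list u La = r1" "length u = n"
    using r by (auto simp: padd_def par_len)
  have "par w = ?C" using P(6) qe last_path by (metis padd0)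
  then have cw: "count_list w La = r2" "length w = n"
    using r by (auto simp: par_len)
  have MU: "MAU u (rev w)"
    using mau_N[of u n "rev w" r1 r2] cu cw r P(7,8,9) pe qe by simp
  have "(u, rev w) \<in> ?W" using MU cu cw by (simp add: Wset_def)
  moreover have "t = ?F (u, rev w)" using tp pe qe P(7) by simp
  ultimately show "t \<in> ?F ` ?W" by blast
next
  let ?A = "(int r2 - int r1, int r1 - int r2)"
  let ?C = "(int r2, int n - int r2)"
  fix t assume "t \<in> ?F ` ?W"
  then obtain x where x: "t = ?F x" "x \<in> ?W" by blast
  obtain u v where xuv: "x = (u,v)" by (cases x)
  have t: "t = ?F (u,v)" and uv: "(u,v) \<in> ?W" using x xuv by auto
  have L: "length u = n" "length v = n" "count_list u La = r1" "count_list v La = r2" "MAU u v"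
    using uv by (auto simp: Wset_def)
  have S: "set (path_from ?A u) \<inter> set (path_from (0,0) (rev v)) = {?C}"
      "set (path_from (0,0) (rev v)) \<inter> set (path_from (0,0) u) = {(0,0)}"
    using mau_N[of u n v r1 r2] L r by auto
  have l1: "last (path_from ?A u) = ?C" using L r by (simp add: last_path padd_def par_len)
  have l2: "last (path_from (0,0) (rev v)) = ?C" using L r by (simp add: last_path par_len)
  show "t \<in> ?N" unfolding t Ntriples_def using S l1 l2 by (simp add: lattice_path_path)
qed

lemma core_card:
  assumes r: "r2 + 2 \<le> r1" "r1 \<le> n"
  shows "Ncount (int r2 - int r1, int r1 - int r2) (0,0) (int r2, int n - int r2) = card (Wset n r1 r2)"
proof -
  have "inj_on (\<lambda>(u,v). (path_from (int r2 - int r1, int r1 - int r2) u, path_from (0,0) (rev v), path_from (0,0) u))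
       (Wset n r1 r2)"
  proof (rule inj_onI, clarsimp)
    fix u v u' v' assume "path_from (int r2 - int r1, int r1 - int r2) u = path_from (int r2 - int r1, int r1 - int r2) u'"
      "path_from (0,0) (rev v) = path_from (0,0) (rev v')"
    then show "u = u' \<and> v = v'" by (metis rev_rev_ident word_of_path)
  qed
  then show ?thesis unfolding Ncount_def using core[OF r] by (simp add: card_image)
qed


lemma all_letter: "(\<forall>c. P c) \<longleftrightarrow> P La \<and> P Lb"
proof
  assume h: "P La \<and> P Lb"
  show "\<forall>c. P c"
  proof
    fix c show "P c" using h by (cases c) auto
  qed
qed simp

lemma finite_letter: "finite (UNIV :: letter set)"
proof -
  have "UNIV = {La, Lb}" using letter.exhaust by auto
  then show ?thesis by (metis finite.emptyI finite.insertI)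
qed

lemma finite_len: "finite {xs :: letter list. length xs = n}"
  using finite_lists_length_eq[OF finite_letter, of n] by simp

lemma finite_pairs: "finite {(u :: letter list, v :: letter list). length u = n \<and> length v = n \<and> P u v}"
proof -
  have "{(u :: letter list, v :: letter list). length u = n \<and> length v = n \<and> P u v} \<subseteq>
        {xs. length xs = n} \<times> {xs. length xs = n}" by auto
  then show ?thesis using finite_len by (meson finite_SigmaI finite_subset)
qed

theorem mainTheorem11:
  fixes n :: nat
  assumes "n \<ge> 2"
  shows "card {(u, v). length u = n \<and> length v = n \<and> MAU u v \<and>
            (\<forall>c. \<bar>int (count_list u c) - int (count_list v c)\<bar> \<ge> 2)}
         = 2 * (\<Sum>r2 = 0..n - 2. \<Sum>r1 = r2 + 2..n.
                  Ncount (int r2 - int r1, int r1 - int r2) (0, 0) (int r2, int n - int r2))"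
proof -
  let ?S = "{(u, v). length u = n \<and> length v = n \<and> MAU u v \<and>
            (\<forall>c. \<bar>int (count_list u c) - int (count_list v c)\<bar> \<ge> 2)}"
  define Sp where "Sp = {(u, v). length u = n \<and> length v = n \<and> MAU u v \<and>
            count_list v La + 2 \<le> count_list u La}"
  let ?sw = "\<lambda>(u :: letter list, v :: letter list). (v, u)"
  have cond: "(\<forall>c. \<bar>int (count_list u c) - int (count_list v c)\<bar> \<ge> 2) \<longleftrightarrow>
       (count_list v La + 2 \<le> count_list u La \<or> count_list u La + 2 \<le> count_list v La)"
    if "length u = n" "length v = n" for u v :: "letter list"
  proof -
    have "length u = count_list u La + count_list u Lb" "length v = count_list v La + count_list v Lb"
      by (rule length_count)+
    have "(\<forall>c. \<bar>int (count_list u c) - int (count_list v c)\<bar> \<ge> 2) \<longleftrightarrow>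
          \<bar>int (count_list u La) - int (count_list v La)\<bar> \<ge> 2 \<and>
          \<bar>int (count_list u Lb) - int (count_list v Lb)\<bar> \<ge> 2"
      by (rule all_letter)
    then show ?thesis using that \<open>length u = _ + _\<close> \<open>length v = _ + _\<close> by auto
  qed
  have Seq: "?S = Sp \<union> ?sw ` Sp"
  proof (intro equalityI subsetI)
    fix x assume "x \<in> ?S"
    then obtain u v where x: "x = (u,v)" "length u = n" "length v = n" "MAU u v"
      "\<forall>c. \<bar>int (count_list u c) - int (count_list v c)\<bar> \<ge> 2" by auto
    then have "count_list v La + 2 \<le> count_list u La \<or> count_list u La + 2 \<le> count_list v La"
      using cond by blast
    then show "x \<in> Sp \<union> ?sw ` Sp"
    proof
      assume "count_list v La + 2 \<le> count_list u La"
      then show ?thesis using x by (auto simp: Sp_def)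
    next
      assume "count_list u La + 2 \<le> count_list v La"
      then have "(v,u) \<in> Sp" using x MAU_sym by (auto simp: Sp_def)
      then show ?thesis using x by force
    qed
  next
    fix x assume "x \<in> Sp \<union> ?sw ` Sp"
    then obtain u v where uv: "(u,v) \<in> Sp" "x = (u,v) \<or> x = (v,u)"
      by (metis (no_types, lifting) UnE case_prod_conv image_iff surj_pair)
    then have h: "length u = n" "length v = n" "MAU u v" "MAU v u" "count_list v La + 2 \<le> count_list u La"
      using MAU_sym by (auto simp: Sp_def)
    have c1: "\<forall>c. \<bar>int (count_list u c) - int (count_list v c)\<bar> \<ge> 2" using cond[of u v] h by blast
    have c2: "\<forall>c. \<bar>int (count_list v c) - int (count_list u c)\<bar> \<ge> 2" using cond[of v u] h by blast
    show "x \<in> ?S" using uv(2) h c1 c2 by auto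
  qed
  have fSp: "finite Sp" unfolding Sp_def by (rule finite_pairs)
  have disj: "Sp \<inter> ?sw ` Sp = {}" by (auto simp: Sp_def)
  have inj: "inj_on ?sw Sp" by (auto simp: inj_on_def)
  have c1: "card ?S = 2 * card Sp"
    using Seq card_Un_disjoint[OF fSp finite_imageI[OF fSp] disj] card_image[OF inj] by simp
  have Sp_U: "Sp = (\<Union>r2\<in>{0..n-2}. \<Union>r1\<in>{r2+2..n}. Wset n r1 r2)"
  proof (intro equalityI subsetI)
    fix x assume "x \<in> Sp"
    then obtain u v where x: "x = (u,v)" "length u = n" "length v = n" "MAU u v"
      "count_list v La + 2 \<le> count_list u La" by (auto simp: Sp_def)
    have "count_list u La \<le> n" using x length_count[of u] by simp
    then show "x \<in> (\<Union>r2\<in>{0..n-2}. \<Union>r1\<in>{r2+2..n}. Wset n r1 r2)"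
      using x by (auto simp: Wset_def intro!: bexI[of _ "count_list v La"] bexI[of _ "count_list u La"])
  next
    fix x assume "x \<in> (\<Union>r2\<in>{0..n-2}. \<Union>r1\<in>{r2+2..n}. Wset n r1 r2)"
    then show "x \<in> Sp" by (auto simp: Wset_def Sp_def)
  qed
  have fW: "finite (Wset n r1 r2)" for r1 r2 unfolding Wset_def by (rule finite_pairs)
  have "card Sp = (\<Sum>r2 = 0..n - 2. card (\<Union>r1\<in>{r2+2..n}. Wset n r1 r2))"
    unfolding Sp_U
    apply (rule card_UN_disjoint)
      apply simp
     apply (simp add: fW)
    apply (auto simp: Wset_def)
    done
  also have "\<dots> = (\<Sum>r2 = 0..n - 2. \<Sum>r1 = r2 + 2..n. card (Wset n r1 r2))"
    apply (rule sum.cong[OF refl], rule card_UN_disjoint)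
      apply simp
     apply (simp add: fW)
    apply (auto simp: Wset_def)
    done
  also have "\<dots> = (\<Sum>r2 = 0..n - 2. \<Sum>r1 = r2 + 2..n.
                  Ncount (int r2 - int r1, int r1 - int r2) (0, 0) (int r2, int n - int r2))"
    by (intro sum.cong refl) (simp add: core_card)
  finally show ?thesis using c1 by simp
qed

end
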